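(* Let $(S,d)$ be a finite metric space partitioned into two disjoint groups $S=S_1\cup S_2$, let $k_1,k_2$ be nonnegative integers with $k=k_1+k_2$, and let $r^*$ be the optimal radius of the fair $k$-center problem. For $l\in\{1,2\}$ let $\Gamma_l\subseteq S_l$ be a $2r^*$-independent center set of $S_l$, with $|\Gamma_1|>k_1$ and $|\Gamma_2|>k_2$. Run Algorithm A (described in the context). For the $j$-th iteration of its while-loop, let $C^j$ and $\Gamma^j_l$ ($l=1,2$) denote the values of $C$ and of the current sets $\Gamma_l$ in that iteration. Then for every such $j$ and each $l\in\{1,2\}$: (1) $|\Gamma^j_l|\le k-|C^j|$; (2) $|C^j|\le k$; (3) $|C^j\cap S_l|\le k_l$.
   Context: Fair $k$-center: $C\subseteq S$ is feasible if $|C\cap S_l|\le k_l$ for each $l$; cost $\max_{s\in S}d(s,C)$, $d(s,C)=\min_{c\in C}d(s,c)$, $d(s,\emptyset)=\infty$; $r^*$ is the minimum cost over feasible $C$. For $T\subseteq S$, $\Gamma\subseteq T$ is a $\lambda$-independent center set of $T$ if distinct points of $\Gamma$ are at distance $>\lambda$ and every point of $T$ is within $\lambda$ of some point of $\Gamma$. Algorithm A (input $\Gamma_1,\Gamma_2$). Phase 1: $C\leftarrow\emptyset$; build the bipartite graph $G$ on vertex set $\Gamma_1\cup\Gamma_2$ where $p\in\Gamma_1$, $q\in\Gamma_2$ are adjacent iff $d(p,q)\le 3r^*$; for each degree-$0$ vertex $i$, if $d(C,i)>2r^*$ add $i$ to $C$; remove all degree-$0$ vertices from $G$ (throughout, the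 current $\Gamma_l$ means the vertices of $G$ that lie in the original $\Gamma_l$). Phase 2: while $|C|\le k$ and $G$ is nonempty: if $G$ has no vertex of degree $1$, pick an arbitrary edge, let $p$ be one of its endpoints (arbitrary) and $q$ the other, add $p$ to $C$ and delete $p$ and $q$ from $G$ (and from the current $\Gamma$ sets containing them); otherwise, pick a vertex $i$ of $G$ maximizing $|N_1(i)|$, where $N_1(i)$ is the set of degree-$1$ neighbours of $i$ in $G$, add $i$ to $C$ and delete $i$ and $N_1(i)$ from $G$ (and from the current $\Gamma$ sets). Then, if some $l\in\{1,2\}$ satisfies $|C\cap S_l|+|\Gamma_l|\le k_l$ (current $\Gamma_l$), set $C\leftarrow C\cup\Gamma_l$, let $\Gamma'_{3-l}=\{p\in\Gamma_{3-l}: d(p,C)>3r^*\}$ (current $\Gamma_{3-l}$), and return $C\cup\Gamma'_{3-l}$. If the loop ends without returning, output $C$. *)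

theory Defs
  imports "HOL-Analysis.Abstract_Metric_Spaces" "HOL-Library.Extended_Real"
begin

definition fair_feasible ::
  "'a set \<Rightarrow> 'a set \<Rightarrow> 'a set \<Rightarrow> nat \<Rightarrow> nat \<Rightarrow> 'a set \<Rightarrow> bool" where
  "fair_feasible S S1 S2 k1 k2 C \<longleftrightarrow>
     C \<subseteq> S \<and> card (C \<inter> S1) \<le> k1 \<and> card (C \<inter> S2) \<le> k2"

text \<open>Distance of a point to a set, d(s,C) = min over C, with d(s,{}) = infinity.\<close>
definition dist_to_set :: "('a \<Rightarrow> 'a \<Rightarrow> real) \<Rightarrow> 'a \<Rightarrow> 'a set \<Rightarrow> ereal" where
  "dist_to_set d s C = (INF c\<in>C. ereal (d s c))"

definition kc_cost :: "('a \<Rightarrow> 'a \<Rightarrow> real) \<Rightarrow> 'a set \<Rightarrow> 'a set \<Rightarrow> ereal" where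
  "kc_cost d S C = (SUP s\<in>S. dist_to_set d s C)"

definition opt_radius ::
  "('a \<Rightarrow> 'a \<Rightarrow> real) \<Rightarrow> 'a set \<Rightarrow> 'a set \<Rightarrow> 'a set \<Rightarrow> nat \<Rightarrow> nat \<Rightarrow> ereal" where
  "opt_radius d S S1 S2 k1 k2 = (INF C\<in>{C. fair_feasible S S1 S2 k1 k2 C}. kc_cost d S C)"

definition indep_center_set ::
  "('a \<Rightarrow> 'a \<Rightarrow> real) \<Rightarrow> 'a set \<Rightarrow> 'a set \<Rightarrow> real \<Rightarrow> bool" where
  "indep_center_set d T \<Gamma> lam \<longleftrightarrow>
     \<Gamma> \<subseteq> T \<and>
     (\<forall>p\<in>\<Gamma>. \<forall>q\<in>\<Gamma>. p \<noteq> q \<longrightarrow> d p q > lam) \<and>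
     (\<forall>t\<in>T. \<exists>p\<in>\<Gamma>. d t p \<le> lam)"

text \<open>Edges of the bipartite graph G on Gamma1 \<union> Gamma2: p in Gamma1, q in Gamma2, d(p,q) \<le> 3r*.
  The graph at any time is the subgraph induced on the current vertex set V.\<close>
definition adjA :: "('a \<Rightarrow> 'a \<Rightarrow> real) \<Rightarrow> 'a set \<Rightarrow> 'a set \<Rightarrow> real \<Rightarrow> 'a \<Rightarrow> 'a \<Rightarrow> bool" where
  "adjA d G1 G2 r x y \<longleftrightarrow>
     ((x \<in> G1 \<and> y \<in> G2) \<or> (x \<in> G2 \<and> y \<in> G1)) \<and> d x y \<le> 3 * r"

definition nbrs :: "('a \<Rightarrow> 'a \<Rightarrow> real) \<Rightarrow> 'a set \<Rightarrow> 'a set \<Rightarrow> real \<Rightarrow> 'a set \<Rightarrow> 'a \<Rightarrow> 'a set" where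
  "nbrs d G1 G2 r V x = {y \<in> V. adjA d G1 G2 r x y}"

definition degA :: "('a \<Rightarrow> 'a \<Rightarrow> real) \<Rightarrow> 'a set \<Rightarrow> 'a set \<Rightarrow> real \<Rightarrow> 'a set \<Rightarrow> 'a \<Rightarrow> nat" where
  "degA d G1 G2 r V x = card (nbrs d G1 G2 r V x)"

definition N1 :: "('a \<Rightarrow> 'a \<Rightarrow> real) \<Rightarrow> 'a set \<Rightarrow> 'a set \<Rightarrow> real \<Rightarrow> 'a set \<Rightarrow> 'a \<Rightarrow> 'a set" where
  "N1 d G1 G2 r V x = {y \<in> nbrs d G1 G2 r V x. degA d G1 G2 r V y = 1}"

text \<open>Phase 1: the degree-0 vertices are processed in some (arbitrary) order xs; a vertex i
  is added when d(C,i) > 2r* (vacuously true for C = {}).\<close>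
definition phase1_C :: "('a \<Rightarrow> 'a \<Rightarrow> real) \<Rightarrow> real \<Rightarrow> 'a list \<Rightarrow> 'a set" where
  "phase1_C d r xs =
     foldl (\<lambda>C i. if dist_to_set d i C > ereal (2 * r) then insert i C else C) {} xs"

definition isolated0 :: "('a \<Rightarrow> 'a \<Rightarrow> real) \<Rightarrow> 'a set \<Rightarrow> 'a set \<Rightarrow> real \<Rightarrow> 'a set" where
  "isolated0 d G1 G2 r = {x \<in> G1 \<union> G2. degA d G1 G2 r (G1 \<union> G2) x = 0}"

definition stepA ::
  "('a \<Rightarrow> 'a \<Rightarrow> real) \<Rightarrow> 'a set \<Rightarrow> 'a set \<Rightarrow> real \<Rightarrow> 'a set \<Rightarrow> 'a set \<Rightarrow> 'a set \<Rightarrow> 'a set \<Rightarrow> bool" where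
  "stepA d G1 G2 r C V C' V' \<longleftrightarrow>
     ((\<forall>x\<in>V. degA d G1 G2 r V x \<noteq> 1) \<and>
        (\<exists>p q. p \<in> V \<and> q \<in> V \<and> adjA d G1 G2 r p q \<and> C' = insert p C \<and> V' = V - {p, q}))
   \<or> ((\<exists>x\<in>V. degA d G1 G2 r V x = 1) \<and>
        (\<exists>i\<in>V. (\<forall>j\<in>V. card (N1 d G1 G2 r V j) \<le> card (N1 d G1 G2 r V i)) \<and>
               C' = insert i C \<and> V' = V - insert i (N1 d G1 G2 r V i)))"

text \<open>Return test at the end of the loop body (current Gamma_l = V \<inter> Gamma_l).\<close>
definition returnsA ::
  "'a set \<Rightarrow> 'a set \<Rightarrow> nat \<Rightarrow> nat \<Rightarrow> 'a set \<Rightarrow> 'a set \<Rightarrow> 'a set \<Rightarrow> 'a set \<Rightarrow> bool" where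
  "returnsA S1 S2 k1 k2 G1 G2 C V \<longleftrightarrow>
     card (C \<inter> S1) + card (V \<inter> G1) \<le> k1 \<or> card (C \<inter> S2) + card (V \<inter> G2) \<le> k2"

text \<open>C V: (C,V) are the values of C and of the vertex set of G at the start
  of some iteration of the while loop (i.e. the loop guard |C| \<le> k and G \<noteq> {} holds there),
  for some run of Algorithm A (over all arbitrary choices).\<close>
inductive algA_iter ::
  "('a \<Rightarrow> 'a \<Rightarrow> real) \<Rightarrow> 'a set \<Rightarrow> 'a set \<Rightarrow> nat \<Rightarrow> nat \<Rightarrow> 'a set \<Rightarrow> 'a set \<Rightarrow> real
     \<Rightarrow> 'a set \<Rightarrow> 'a set \<Rightarrow> bool"
  for d S1 S2 k1 k2 G1 G2 r where
  first: "\<lbrakk> distinct xs; set xs = isolated0 d G1 G2 r;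
           C = phase1_C d r xs; V = (G1 \<union> G2) - isolated0 d G1 G2 r;
           card C \<le> k1 + k2; V \<noteq> {} \<rbrakk>
          \<Longrightarrow> algA_iter d S1 S2 k1 k2 G1 G2 r C V"
| step: "\<lbrakk> algA_iter d S1 S2 k1 k2 G1 G2 r C V; stepA d G1 G2 r C V C' V';
           \<not> returnsA S1 S2 k1 k2 G1 G2 C' V';
           card C' \<le> k1 + k2; V' \<noteq> {} \<rbrakk>
          \<Longrightarrow> algA_iter d S1 S2 k1 k2 G1 G2 r C' V'"

end

theory Submission
  imports Defs
begin

lemma phase1_sub: "foldl (\<lambda>C i. if dist_to_set d i C > ereal (2 * r) then insert i C else C) A xs \<subseteq> A \<union> set xs"
  apply (induction xs arbitrary: A)
   apply simp
  apply (simp only: foldl_Cons)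
  apply (rule subset_trans, assumption)
  apply auto
  done

lemma opt_attained:
  assumes "finite S" "opt_radius d S S1 S2 k1 k2 = ereal r"
  obtains Cs where "fair_feasible S S1 S2 k1 k2 Cs" "kc_cost d S Cs = ereal r"
proof -
  let ?F = "{C. fair_feasible S S1 S2 k1 k2 C}"
  have fin: "finite ?F" using assms(1)
    by (rule finite_subset[OF _ iffD2[OF finite_Pow_iff], rotated]) (auto simp: fair_feasible_def)
  have ne: "{} \<in> ?F" by (simp add: fair_feasible_def)
  let ?I = "kc_cost d S ` ?F"
  have "Min ?I = Inf ?I" using fin ne by (intro Min_Inf) auto
  moreover have "Min ?I \<in> ?I" using fin ne by (intro Min_in) auto
  ultimately have "opt_radius d S S1 S2 k1 k2 \<in> ?I" unfolding opt_radius_def by simp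
  then show ?thesis using that assms(2) by auto
qed

lemma dist_attained:
  assumes "finite Cs" "dist_to_set d s Cs \<le> ereal r"
  shows "\<exists>c\<in>Cs. d s c \<le> r"
proof -
  have ne: "Cs \<noteq> {}" using assms(2) by (auto simp: dist_to_set_def top_ereal_def)
  let ?I = "(\<lambda>c. ereal (d s c)) ` Cs"
  have "Min ?I = Inf ?I" using assms(1) ne by (intro Min_Inf) auto
  moreover have "Min ?I \<in> ?I" using assms(1) ne by (intro Min_in) auto
  ultimately have "dist_to_set d s Cs \<in> ?I" unfolding dist_to_set_def by simp
  then show ?thesis using assms(2) by auto
qed

theorem lemma4:
  fixes d :: "'a \<Rightarrow> 'a \<Rightarrow> real" and S S1 S2 G1 G2 C V :: "'a set"
    and k1 k2 :: nat and r :: real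
  assumes "Metric_space S d" and "finite S"
    and "S = S1 \<union> S2" and "S1 \<inter> S2 = {}"
    and "opt_radius d S S1 S2 k1 k2 = ereal r"
    and "indep_center_set d S1 G1 (2 * r)" and "indep_center_set d S2 G2 (2 * r)"
    and "card G1 > k1" and "card G2 > k2"
    and "algA_iter d S1 S2 k1 k2 G1 G2 r C V"
  shows "int (card (V \<inter> G1)) \<le> int (k1 + k2) - int (card C)
       \<and> int (card (V \<inter> G2)) \<le> int (k1 + k2) - int (card C)
       \<and> card C \<le> k1 + k2
       \<and> card (C \<inter> S1) \<le> k1 \<and> card (C \<inter> S2) \<le> k2"
proof -
  interpret M: Metric_space S d by fact
  note I1 = assms(6)[unfolded indep_center_set_def]
  note I2 = assms(7)[unfolded indep_center_set_def]
  have G1S: "G1 \<subseteq> S1" and G2S: "G2 \<subseteq> S2" using I1 I2 by auto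
  have finS1: "finite S1" and finS2: "finite S2" using assms(2,3) by auto
  have finG1: "finite G1" and finG2: "finite G2" using G1S G2S finS1 finS2 finite_subset by blast+
  have G12: "G1 \<inter> G2 = {}" using G1S G2S assms(4) by auto
  obtain Cs where fe: "fair_feasible S S1 S2 k1 k2 Cs" and cost: "kc_cost d S Cs = ereal r"
    using opt_attained[OF assms(2,5)] by blast
  have CsS: "Cs \<subseteq> S" and Cs1: "card (Cs \<inter> S1) \<le> k1" and Cs2: "card (Cs \<inter> S2) \<le> k2"
    using fe by (auto simp: fair_feasible_def)
  have finCs: "finite Cs" using CsS assms(2) finite_subset by blast
  have cov: "\<exists>c\<in>Cs. d s c \<le> r" if "s \<in> S" for s
  proof -
    have "dist_to_set d s Cs \<le> kc_cost d S Cs" unfolding kc_cost_def using that by (rule SUP_upper)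
    then show ?thesis using cost dist_attained[OF finCs] by simp
  qed
  then obtain f where f: "\<And>s. s \<in> S \<Longrightarrow> f s \<in> Cs \<and> d s (f s) \<le> r" by metis
  have "G1 \<noteq> {}" using assms(8) by auto
  then obtain g where "g \<in> G1" by blast
  hence "g \<in> S" using G1S assms(3) by auto
  hence r0: "r \<ge> 0" using f[of g] M.nonneg[of g "f g"] by linarith
  have GS: "G1 \<union> G2 \<subseteq> S" using G1S G2S assms(3) by auto
  have cardCs: "card Cs \<le> k1 + k2"
  proof -
    have "Cs = (Cs \<inter> S1) \<union> (Cs \<inter> S2)" using CsS assms(3) by auto
    hence "card Cs \<le> card (Cs \<inter> S1) + card (Cs \<inter> S2)" by (metis card_Un_le)
    thus ?thesis using Cs1 Cs2 by linarith
  qed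
  have dtri: "d p q \<le> d p c + d q c" if "p \<in> S" "q \<in> S" "c \<in> S" for p q c
    using M.triangle[OF that(1,3,2)] M.commute[of c q] by linarith
  have F1: "f p \<noteq> f q" if "p \<in> G1" "q \<in> G1" "p \<noteq> q" for p q
  proof
    assume e: "f p = f q"
    have "p \<in> S" "q \<in> S" using that GS by auto
    hence "d p q \<le> 2 * r" using dtri[of p q "f p"] f[of p] f[of q] e CsS by auto
    thus False using I1 that by force
  qed
  have F2: "f p \<noteq> f q" if "p \<in> G2" "q \<in> G2" "p \<noteq> q" for p q
  proof
    assume e: "f p = f q"
    have "p \<in> S" "q \<in> S" using that GS by auto
    hence "d p q \<le> 2 * r" using dtri[of p q "f p"] f[of p] f[of q] e CsS by auto
    thus False using I2 that by force
  qed
  have adjS: "adjA d G1 G2 r q p" if "adjA d G1 G2 r p q" for p q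
    using that M.commute[of p q] by (auto simp: adjA_def)
  have F3: "adjA d G1 G2 r p q" if "p \<in> G1" "q \<in> G2" "f p = f q" for p q
  proof -
    have "p \<in> S" "q \<in> S" using that GS by auto
    hence "d p q \<le> 2 * r" using dtri[of p q "f p"] f[of p] f[of q] that CsS by auto
    thus ?thesis using that r0 by (auto simp: adjA_def)
  qed
  have degpos: "degA d G1 G2 r (G1 \<union> G2) p \<noteq> 0" if "q \<in> G1 \<union> G2" "adjA d G1 G2 r p q" for p q
  proof -
    have "finite (nbrs d G1 G2 r (G1 \<union> G2) p)" using finG1 finG2 by (auto simp: nbrs_def)
    moreover have "q \<in> nbrs d G1 G2 r (G1 \<union> G2) p" using that by (auto simp: nbrs_def)
    ultimately show ?thesis unfolding degA_def by (metis card_0_eq empty_iff)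
  qed
  let ?iso = "isolated0 d G1 G2 r"
  have F4: "f p \<in> S1" if "p \<in> G1" "p \<in> ?iso" for p
  proof (rule ccontr)
    assume n: "f p \<notin> S1"
    have pS: "p \<in> S" using that GS by auto
    hence fp: "f p \<in> S2" using f[of p] CsS assms(3) n by auto
    then obtain q where q: "q \<in> G2" "d (f p) q \<le> 2 * r" using I2 by blast
    have "q \<in> S" "f p \<in> S" using q(1) GS fp assms(3) by auto
    hence "d p q \<le> 3 * r" using M.triangle[of p "f p" q] pS f[of p] q by linarith
    hence "adjA d G1 G2 r p q" using that q by (auto simp: adjA_def)
    hence "degA d G1 G2 r (G1 \<union> G2) p \<noteq> 0" using degpos q by blast
    thus False using that by (auto simp: isolated0_def)
  qed
  have F5: "f p \<in> S2" if "p \<in> G2" "p \<in> ?iso" for p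
  proof (rule ccontr)
    assume n: "f p \<notin> S2"
    have pS: "p \<in> S" using that GS by auto
    hence fp: "f p \<in> S1" using f[of p] CsS assms(3) n by auto
    then obtain q where q: "q \<in> G1" "d (f p) q \<le> 2 * r" using I1 by blast
    have "q \<in> S" "f p \<in> S" using q(1) GS fp assms(3) by auto
    hence "d p q \<le> 3 * r" using M.triangle[of p "f p" q] pS f[of p] q by linarith
    hence "adjA d G1 G2 r p q" using that q by (auto simp: adjA_def)
    hence "degA d G1 G2 r (G1 \<union> G2) p \<noteq> 0" using degpos q by blast
    thus False using that by (auto simp: isolated0_def)
  qed
  have isoG: "?iso \<subseteq> G1 \<union> G2" by (auto simp: isolated0_def)
  have finiso: "finite ?iso" using isoG finG1 finG2 finite_subset by blast
  have notiso: "p \<notin> ?iso" if "p \<in> G1 \<union> G2" "adjA d G1 G2 r p q" "q \<in> G1 \<union> G2" for p q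
    using degpos[OF that(3,2)] by (auto simp: isolated0_def)
  have base1: "card (C \<inter> S1) \<le> k1" if "C \<subseteq> ?iso" for C
  proof -
    have "C \<inter> S1 \<subseteq> ?iso \<inter> G1" using that isoG G2S assms(4) by auto
    hence "card (C \<inter> S1) \<le> card (?iso \<inter> G1)" using finiso by (intro card_mono) auto
    also have "\<dots> = card (f ` (?iso \<inter> G1))"
      by (rule card_image[symmetric]) (auto intro!: inj_onI dest: F1)
    also have "\<dots> \<le> card (Cs \<inter> S1)"
      using finCs GS f F4 by (intro card_mono) auto
    finally show ?thesis using Cs1 by linarith
  qed
  have base2: "card (C \<inter> S2) \<le> k2" if "C \<subseteq> ?iso" for C
  proof -
    have "C \<inter> S2 \<subseteq> ?iso \<inter> G2" using that isoG G1S assms(4) by auto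
    hence "card (C \<inter> S2) \<le> card (?iso \<inter> G2)" using finiso by (intro card_mono) auto
    also have "\<dots> = card (f ` (?iso \<inter> G2))"
      by (rule card_image[symmetric]) (auto intro!: inj_onI dest: F2)
    also have "\<dots> \<le> card (Cs \<inter> S2)"
      using finCs GS f F5 by (intro card_mono) auto
    finally show ?thesis using Cs2 by linarith
  qed
  have inj_gen: "inj_on f (((G1 \<union> G2 - ?iso) \<inter> Ga) \<union> ?iso)"
    if Ga: "Ga = G1 \<or> Ga = G2" for Ga
  proof (rule inj_onI, rule ccontr)
    fix u w assume u: "u \<in> ((G1 \<union> G2 - ?iso) \<inter> Ga) \<union> ?iso"
      and w: "w \<in> ((G1 \<union> G2 - ?iso) \<inter> Ga) \<union> ?iso" and e: "f u = f w" and ne: "u \<noteq> w"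
    have uG: "u \<in> G1 \<union> G2" "w \<in> G1 \<union> G2" using u w isoG by auto
    show False
    proof (cases "u \<in> G1")
      case True
      show False
      proof (cases "w \<in> G1")
        case True then show False using F1 \<open>u \<in> G1\<close> e ne by blast
      next
        case False
        hence wG: "w \<in> G2" using uG by auto
        hence a: "adjA d G1 G2 r u w" using F3 True e by blast
        have "u \<notin> ?iso" "w \<notin> ?iso" using notiso uG a adjS by blast+
        then show False using u w Ga G12 True wG by auto
      qed
    next
      case False
      hence uG2: "u \<in> G2" using uG by auto
      show False
      proof (cases "w \<in> G2")
        case True then show False using F2 uG2 e ne by blast
      next
        case False
        hence wG: "w \<in> G1" using uG by auto
        hence a: "adjA d G1 G2 r w u" using F3 uG2 e by metis
        have "u \<notin> ?iso" "w \<notin> ?iso" using notiso uG a adjS by blast+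
        then show False using u w Ga G12 uG2 wG by auto
      qed
    qed
  qed
  have basecard: "card ((G1 \<union> G2 - ?iso) \<inter> Ga) + card C \<le> k1 + k2"
    if Ga: "Ga = G1 \<or> Ga = G2" and C: "C \<subseteq> ?iso" for Ga C
  proof -
    have fin: "finite ((G1 \<union> G2 - ?iso) \<inter> Ga)" using finG1 finG2 by auto
    have "card C \<le> card ?iso" using C finiso card_mono by blast
    hence "card ((G1 \<union> G2 - ?iso) \<inter> Ga) + card C \<le> card (((G1 \<union> G2 - ?iso) \<inter> Ga) \<union> ?iso)"
      using fin finiso by (subst card_Un_disjoint) auto
    also have "\<dots> = card (f ` (((G1 \<union> G2 - ?iso) \<inter> Ga) \<union> ?iso))"
      using inj_gen[OF Ga] by (simp add: card_image)
    also have "\<dots> \<le> card Cs" using finCs f GS Ga isoG by (intro card_mono) auto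
    finally show ?thesis using cardCs by linarith
  qed
  define Inv where "Inv C V \<longleftrightarrow> finite C \<and> C \<subseteq> G1 \<union> G2 \<and> C \<inter> V = {} \<and> V \<subseteq> G1 \<union> G2
     \<and> card (V \<inter> G1) + card C \<le> k1 + k2 \<and> card (V \<inter> G2) + card C \<le> k1 + k2
     \<and> card (C \<inter> S1) \<le> k1 \<and> card (C \<inter> S2) \<le> k2" for C V
  have "Inv C V" using assms(10)
  proof (induction rule: algA_iter.induct)
    case (first xs C V)
    have Ciso: "C \<subseteq> ?iso" using phase1_sub[where A="{}" and xs=xs] first(2,3) by (simp add: phase1_C_def)
    show ?case unfolding Inv_def
      using Ciso base1 base2 basecard[of G1 C] basecard[of G2 C] first(4) isoG finiso finite_subset[OF Ciso]
      by auto
  next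
    case (step C V C' V')
    have IH: "Inv C V" by fact
    have finV: "finite V" using IH finG1 finG2 finite_subset unfolding Inv_def by blast
    obtain p a b where p: "p \<in> V" "C' = insert p C" "V' \<subseteq> V - {p}"
      and a: "a \<in> V \<inter> G1" "a \<notin> V'" and b: "b \<in> V \<inter> G2" "b \<notin> V'"
    proof -
      consider (c1) p q where "p \<in> V" "q \<in> V" "adjA d G1 G2 r p q" "C' = insert p C" "V' = V - {p, q}"
        | (c2) x i where "x \<in> V" "degA d G1 G2 r V x = 1" "i \<in> V"
           "\<forall>j\<in>V. card (N1 d G1 G2 r V j) \<le> card (N1 d G1 G2 r V i)"
           "C' = insert i C" "V' = V - insert i (N1 d G1 G2 r V i)"
        using step(2) unfolding stepA_def by blast
      then show ?thesis
      proof cases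
        case c1
        then show ?thesis using that[of p] unfolding adjA_def by blast
      next
        case c2
        have "card (nbrs d G1 G2 r V x) = 1" using c2(2) by (simp add: degA_def)
        then obtain j where j: "nbrs d G1 G2 r V x = {j}" by (rule card_1_singletonE)
        hence jV: "j \<in> V" and ax: "adjA d G1 G2 r j x" using adjS by (auto simp: nbrs_def)
        hence "x \<in> N1 d G1 G2 r V j" using c2(1,2) by (auto simp: N1_def nbrs_def)
        moreover have "finite (N1 d G1 G2 r V j)" using finV by (auto simp: N1_def nbrs_def)
        ultimately have "card (N1 d G1 G2 r V j) \<noteq> 0" by auto
        hence "card (N1 d G1 G2 r V i) \<noteq> 0" using c2(4) jV by fastforce
        then obtain y where "y \<in> N1 d G1 G2 r V i" by (metis card.empty ex_in_conv)
        hence y: "y \<in> V" "adjA d G1 G2 r i y" by (auto simp: N1_def nbrs_def)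
        have "y \<in> N1 d G1 G2 r V i" by fact
        then show ?thesis using that[of i] c2 y unfolding adjA_def by blast
      qed
    qed
    have pC: "p \<notin> C" using IH p(1) unfolding Inv_def by blast
    have finC: "finite C" using IH unfolding Inv_def by blast
    have cC: "card C' = card C + 1" using p(2) pC finC by simp
    have lt1: "card (V' \<inter> G1) < card (V \<inter> G1)"
      using a p(3) finV by (intro psubset_card_mono) auto
    have lt2: "card (V' \<inter> G2) < card (V \<inter> G2)"
      using b p(3) finV by (intro psubset_card_mono) auto
    have C'S: "C' \<subseteq> S1 \<union> S2" using IH p(1,2) GS assms(3) unfolding Inv_def by blast
    have finC': "finite C'" using finC p(2) by simp
    have split: "card C' = card (C' \<inter> S1) + card (C' \<inter> S2)"
    proof -
      have "C' = (C' \<inter> S1) \<union> (C' \<inter> S2)" using C'S by auto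
      hence "card C' = card ((C' \<inter> S1) \<union> (C' \<inter> S2))" by simp
      also have "\<dots> = card (C' \<inter> S1) + card (C' \<inter> S2)"
        using finC' assms(4) by (intro card_Un_disjoint) auto
      finally show ?thesis .
    qed
    have r1: "card (V' \<inter> G1) + card C' \<le> k1 + k2" using IH lt1 cC unfolding Inv_def by linarith
    have r2: "card (V' \<inter> G2) + card C' \<le> k1 + k2" using IH lt2 cC unfolding Inv_def by linarith
    have nr: "card (C' \<inter> S1) + card (V' \<inter> G1) > k1" "card (C' \<inter> S2) + card (V' \<inter> G2) > k2"
      using step(3) unfolding returnsA_def by auto
    show ?case unfolding Inv_def
      using IH p r1 r2 nr split finC' unfolding Inv_def by auto
  qed
  then show ?thesis unfolding Inv_def by auto
qed

end
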